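(* Let $w$ be a string of length $n$ and $i$ a position of $w$ with $i-\mu(i)\ge1$, $i+\mu(i)-1\le n$ and $\mu(i)>1$. Then there exists an integer $j$ with $i<j<i+\mu(i)$ such that either $\mu(j)=\mu(i)$ or $\mu(j)\ge 2\mu(i)$.
   Context: For a position $i\in\{1,\dots,n\}$ of $w$, the local period $\mu(i)$ is the least positive integer $\mu$ such that $w[j]=w[j+\mu]$ for all $j$ with $\max\{1,i-\mu\}\le j$ and $j+\mu\le\min\{n,i+\mu-1\}$. *)

theory Defs
  imports Main
begin

(* Strings are lists; positions are 1-based: w[j] is  w ! (j - 1). *)
definition sat_local_period :: "'a list \<Rightarrow> nat \<Rightarrow> nat \<Rightarrow> bool" where
  "sat_local_period w i m \<longleftrightarrow>
     (\<forall>j. max 1 (int i - int m) \<le> int j \<and> j + m \<le> min (length w) (i + m - 1)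
          \<longrightarrow> w ! (j - 1) = w ! (j + m - 1))"

definition local_period :: "'a list \<Rightarrow> nat \<Rightarrow> nat" where
  "local_period w i = (LEAST m. 0 < m \<and> sat_local_period w i m)"

end

theory Submission
  imports Defs "HOL-Library.List_Lexorder"
begin


lemma sat_iff: "0<m \<Longrightarrow> sat_local_period w i m \<longleftrightarrow>
  (\<forall>x. 1 \<le> x \<longrightarrow> i \<le> x+m \<longrightarrow> x<i \<longrightarrow> x+m \<le> length w \<longrightarrow> w!(x-1) = w!(x+m-1))"
  unfolding sat_local_period_def
proof (intro iffI allI impI)
  fix x assume m: "0<m" and H: "\<forall>j. max 1 (int i - int m) \<le> int j \<and> j + m \<le> min (length w) (i + m - 1) \<longrightarrow>
          w ! (j - 1) = w ! (j + m - 1)" and "1 \<le> x" "i \<le> x+m" "x<i" "x+m \<le> length w"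
  then show "w!(x-1) = w!(x+m-1)" using H[rule_format, of x] by auto
next
  fix j assume m: "0<m" and H: "\<forall>x. 1 \<le> x \<longrightarrow> i \<le> x+m \<longrightarrow> x<i \<longrightarrow> x+m \<le> length w \<longrightarrow> w!(x-1) = w!(x+m-1)"
    and j: "max 1 (int i - int m) \<le> int j \<and> j + m \<le> min (length w) (i + m - 1)"
  then show "w ! (j - 1) = w ! (j + m - 1)" using H[rule_format, of j] by auto
qed

lemma lp_ex: "\<exists>m. 0 < m \<and> sat_local_period w i m"
  by (rule exI[of _ "length w + 1"]) (auto simp: sat_local_period_def)

lemma lp_pos: "0 < local_period w i"
  unfolding local_period_def using LeastI_ex[OF lp_ex] by blast
lemma lp_sat: "sat_local_period w i (local_period w i)"
  unfolding local_period_def using LeastI_ex[OF lp_ex] by blast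
lemma lp_min: "0 < q \<Longrightarrow> q < local_period w i \<Longrightarrow> \<not> sat_local_period w i q"
  unfolding local_period_def using not_less_Least by blast

lemma app_le_iff: "((xs::'b::linorder list) @ ys \<le> xs @ zs) \<longleftrightarrow> ys \<le> zs"
  by (induction xs) auto

lemma app_less: "ys \<noteq> [] \<Longrightarrow> (xs::'b::linorder list) < xs @ ys"
  by (induction xs) (auto simp: neq_Nil_conv)

lemma Nil_le: "[] \<le> (xs::'b::linorder list)"
  by (cases xs) auto

lemma both_le_prefix:
  fixes h :: "'a \<Rightarrow> int"
  shows "inj_on h (set a \<union> set b) \<Longrightarrow> map h a \<le> map h b \<Longrightarrow> map (\<lambda>x. - h x) a \<le> map (\<lambda>x. - h x) b
    \<Longrightarrow> take (length a) b = a"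
proof (induction a arbitrary: b)
  case Nil then show ?case by simp
next
  case (Cons x a)
  show ?case
  proof (cases b)
    case Nil then show ?thesis using Cons.prems by simp
  next
    case (Cons y b')
    with Cons.prems have "h x = h y" by auto
    have "x = y" by (rule inj_onD[OF Cons.prems(1) \<open>h x = h y\<close>]) (auto simp: \<open>b = y # b'\<close>)
    with Cons.prems \<open>b = y # b'\<close> have "map h a \<le> map h b'" "map (\<lambda>x. - h x) a \<le> map (\<lambda>x. - h x) b'" by auto
    moreover have "inj_on h (set a \<union> set b')" using Cons.prems(1) \<open>b = y # b'\<close> by (auto intro: inj_on_subset)
    ultimately show ?thesis using Cons.IH \<open>b = y # b'\<close> \<open>x = y\<close> by simp
  qed
qed



lemma core:
  fixes u :: "'a list" and c :: "nat \<Rightarrow> 'a" and h :: "'a \<Rightarrow> int"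
  assumes m: "length u = m"
  and uc: "\<forall>e<m. u!e = c (m+e)" and cp: "\<forall>e<m. c e = c (e+m)"
  and unb: "\<forall>d. 0<d \<and> d<m \<longrightarrow> (\<exists>s. s+d<m \<and> u!s \<noteq> u!(s+d))"
  and inj: "inj_on h (set u)"
  and k: "0<k" "k<m" and kmax: "\<forall>p. 0<p \<longrightarrow> p<m \<longrightarrow> map h (drop p u) \<le> map h (drop k u)"
  and k2: "0<k2" "k2\<le>k" and k2max: "\<forall>p. 0<p \<longrightarrow> p<m \<longrightarrow> map (\<lambda>x. - h x) (drop p u) \<le> map (\<lambda>x. - h x) (drop k2 u)"
  and q: "0<q" "q<m"
  and rep: "\<forall>y. m+k \<le> y+q \<longrightarrow> y<m+k \<longrightarrow> y+q<2*m \<longrightarrow> c y = c (y+q)"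
  shows False
proof -
  have cu: "c (m+e) = u!e" if "e<m" for e using uc that by simp
  have noper: False if "0<d" "d<m" "\<And>s. s+d<m \<Longrightarrow> u!s = u!(s+d)" for d
    using unb that by blast
  define v where "v = drop k u"
  have lv: "length v = m-k" using m v_def by simp
  have zle: "map h (drop (k+q) u) \<le> map h v" if "k+q \<le> m"
  proof (cases "k+q<m")
    case True then show ?thesis using kmax q v_def by auto
  next
    case False then have "drop (k+q) u = []" using m that by simp
    then show ?thesis using Nil_le by simp
  qed
  show False
  proof (cases "m-k < q")
    case II: True
    show False
    proof (cases "q<k")
      case True
      define p where "p = k-q"
      have "take (m-k) (drop p u) = v"
      proof (rule nth_equalityI)
        show "length (take (m-k) (drop p u)) = length v" using lv m p_def k by simp
        fix e assume "e < length (take (m - k) (drop p u))"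
        then have e: "e < m-k" using m p_def by simp
        have "c (m+p+e) = c (m+p+e+q)" using rep[rule_format, of "m+p+e"] e II True p_def k by simp
        moreover have "c (m+p+e) = u!(p+e)" using cu[of "p+e"] e p_def True k by (simp add: add.assoc)
        moreover have "c (m+p+e+q) = u!(k+e)" using cu[of "k+e"] e p_def True k
          by (metis add.assoc add.commute le_add_diff_inverse2 less_diff_conv less_or_eq_imp_le)
        ultimately show "take (m - k) (drop p u) ! e = v ! e" using e v_def p_def True k m by simp
      qed
      then have "drop p u = v @ drop (m-k) (drop p u)" by (metis append_take_drop_id)
      moreover have "drop (m-k) (drop p u) \<noteq> []" using m p_def True II k by simp
      ultimately have "map h v < map h (drop p u)" by (metis app_less map_append Nil_is_map_conv)
      moreover have "map h (drop p u) \<le> map h v" using kmax p_def True k v_def by auto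
      ultimately show False by simp
    next
      case False
      show False
      proof (rule noper[of q])
        fix s assume s: "s+q<m"
        have "c (m+s) = c (m+s+q)" using rep[rule_format, of "m+s"] s False II by simp
        then show "u!s = u!(s+q)" using cu[of s] cu[of "s+q"] s by (simp add: add.assoc)
      qed (use q in auto)
    qed
  next
    case I: False
    have rep2: "u!(k-q+e) = u!(k+e)" if "k-q+e < k" "q \<le> k" for e
    proof -
      have "c (m+(k-q+e)) = c (m+(k-q+e)+q)" using rep[rule_format, of "m+(k-q+e)"] that I k q by auto
      moreover have "m+(k-q+e)+q = m+(k+e)" using that by simp
      ultimately show ?thesis using cu[of "k-q+e"] cu[of "k+e"] that I k by simp
    qed
    define z where "z = drop q v"
    have vz: "v = take q v @ z" using z_def by simp
    have zd: "z = drop (k+q) u" using z_def v_def by (simp add: add.commute)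
    have zlev: "map h z \<le> map h v" using zle zd I k by simp
    show False
    proof (cases "q<k")
      case True
      have "drop (k-q) u = take q v @ v"
      proof (rule nth_equalityI)
        show "length (drop (k-q) u) = length (take q v @ v)" using lv m True I by simp
        fix e assume "e < length (drop (k-q) u)"
        then have e: "e < m-(k-q)" using m by simp
        show "drop (k-q) u ! e = (take q v @ v) ! e"
        proof (cases "e<q")
          case True
          then show ?thesis using rep2[of e] \<open>q<k\<close> I lv v_def m k by (simp add: nth_append)
        next
          case False
          then show ?thesis using \<open>q<k\<close> I lv v_def m k e by (simp add: nth_append)
        qed
      qed
      then have "map h (take q v @ v) \<le> map h (take q v @ z)"
        using kmax[rule_format, of "k-q"] True k vz v_def by simp
      then have "map h v \<le> map h z" by (simp add: app_le_iff)
      with zlev have "map h v = map h z" by simp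
      then have "length v = length z" by (metis length_map)
      then show False using lv z_def q I k by simp
    next
      case False
      have per1: "u!e = u!(e+q)" if "e<k" for e
      proof -
        have "c (m+e) = c (m+e+q)" using rep[rule_format, of "m+e"] that False I k q by auto
        then show ?thesis using cu[of e] cu[of "e+q"] that I k by (simp add: add.assoc)
      qed
      define t where "t = drop k2 (take k u)"
      have v': "drop k2 u = t @ v"
      proof -
        have "drop k2 u = drop k2 (take k u @ drop k u)" by simp
        also have "\<dots> = t @ v" using k2 k m unfolding t_def v_def by (simp only: drop_append) simp
        finally show ?thesis .
      qed
      have lt: "length t = k - k2" using t_def m k by simp
      have tz: "drop (k2+q) u = t @ z"
      proof (rule nth_equalityI)
        show "length (drop (k2+q) u) = length (t @ z)" using lt zd m k k2 I by simp
        fix e assume "e < length (drop (k2+q) u)"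
        then have e: "e < m-(k2+q)" using m by simp
        show "drop (k2+q) u ! e = (t @ z) ! e"
        proof (cases "e < k-k2")
          case True
          then have "u!(k2+e) = u!(k2+e+q)" using per1[of "k2+e"] k2 by simp
          then show ?thesis using True lt t_def e m k k2 by (simp add: nth_append add.commute add.left_commute)
        next
          case False
          then show ?thesis using lt zd e m k k2 I by (simp add: nth_append add.commute add.left_commute)
        qed
      qed
      have "map (\<lambda>x. - h x) (t @ z) \<le> map (\<lambda>x. - h x) (t @ v)"
      proof (cases "k2+q<m")
        case True then show ?thesis using k2max[rule_format, of "k2+q"] tz v' k2 by simp
      next
        case False
        then have "k2 = k" "q = m-k" using I k2 k by auto
        then have "t = []" "z = []" using lt zd m by auto
        then show ?thesis using Nil_le by simp
      qed
      then have "map (\<lambda>x. - h x) z \<le> map (\<lambda>x. - h x) v" by (simp add: app_le_iff)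
      moreover have "inj_on h (set z \<union> set v)"
        using inj zd v_def by (auto intro: inj_on_subset dest: in_set_dropD)
      ultimately have pz: "take (length z) v = z" using both_le_prefix zlev by blast
      show False
      proof (rule noper[of q])
        fix s assume s: "s+q<m"
        show "u!s = u!(s+q)"
        proof (cases "s<k")
          case True then show ?thesis using per1 by simp
        next
          case False
          define e where "e = s-k"
          have le: "e < length z" using s False e_def zd m by simp
          have "z!e = v!e" using pz le by (metis nth_take)
          then show ?thesis using e_def False zd v_def m s by (simp add: add.commute add.left_commute)
        qed
      qed (use q in auto)
    qed
  qed
qed



lemma crit_exists:
  fixes u :: "'a list" and c :: "nat \<Rightarrow> 'a"
  assumes m: "length u = m" and m2: "2 \<le> m"
  and uc: "\<forall>e<m. u!e = c (m+e)" and cp: "\<forall>e<m. c e = c (e+m)"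
  and unb: "\<forall>d. 0<d \<and> d<m \<longrightarrow> (\<exists>s. s+d<m \<and> u!s \<noteq> u!(s+d))"
  shows "\<exists>k. 0<k \<and> k<m \<and> (\<forall>q. 0<q \<and> q<m \<longrightarrow>
            \<not> (\<forall>y. m+k \<le> y+q \<longrightarrow> y<m+k \<longrightarrow> y+q<2*m \<longrightarrow> c y = c (y+q)))"
proof -
  obtain f :: "'a \<Rightarrow> nat" and N where "f ` set u = {i. i < N}" and injf: "inj_on f (set u)"
    using finite_imp_inj_to_nat_seg[of "set u"] by auto
  define h :: "'a \<Rightarrow> int" where "h x = int (f x)" for x
  have injh: "inj_on h (set u)" using injf unfolding h_def inj_on_def by auto
  have injh': "inj_on (\<lambda>x. - h x) (set u)" using injh unfolding inj_on_def by auto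
  define P where "P = {p. 0<p \<and> p<m}"
  have finP: "finite P" and neP: "P \<noteq> {}" using m2 unfolding P_def by auto
  have exmax: "\<exists>k\<in>P. \<forall>p\<in>P. g p \<le> g k" for g :: "nat \<Rightarrow> int list"
  proof -
    have "Max (g ` P) \<in> g ` P" using finP neP by simp
    then obtain k where "k \<in> P" "g k = Max (g ` P)" by auto
    moreover have "\<forall>p\<in>P. g p \<le> Max (g ` P)" using finP by simp
    ultimately show ?thesis by metis
  qed
  obtain k1 where k1: "k1 \<in> P" "\<forall>p\<in>P. map h (drop p u) \<le> map h (drop k1 u)"
    using exmax[of "\<lambda>p. map h (drop p u)"] by blast
  obtain k2 where k2: "k2 \<in> P" "\<forall>p\<in>P. map (\<lambda>x. - h x) (drop p u) \<le> map (\<lambda>x. - h x) (drop k2 u)"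
    using exmax[of "\<lambda>p. map (\<lambda>x. - h x) (drop p u)"] by blast
  show ?thesis
  proof (cases "k2 \<le> k1")
    case True
    show ?thesis
    proof (intro exI conjI allI impI)
      show "0<k1" "k1<m" using k1 P_def by auto
      fix q assume q: "0<q \<and> q<m"
      show "\<not> (\<forall>y. m+k1 \<le> y+q \<longrightarrow> y<m+k1 \<longrightarrow> y+q<2*m \<longrightarrow> c y = c (y+q))"
      proof
        assume rep: "\<forall>y. m+k1 \<le> y+q \<longrightarrow> y<m+k1 \<longrightarrow> y+q<2*m \<longrightarrow> c y = c (y+q)"
        show False
          by (rule core[OF m uc cp unb injh _ _ _ _ True _ _ _ rep]) (use k1 k2 q P_def in auto)
      qed
    qed
  next
    case False
    show ?thesis
    proof (intro exI conjI allI impI)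
      show "0<k2" "k2<m" using k2 P_def by auto
      fix q assume q: "0<q \<and> q<m"
      show "\<not> (\<forall>y. m+k2 \<le> y+q \<longrightarrow> y<m+k2 \<longrightarrow> y+q<2*m \<longrightarrow> c y = c (y+q))"
      proof
        assume rep: "\<forall>y. m+k2 \<le> y+q \<longrightarrow> y<m+k2 \<longrightarrow> y+q<2*m \<longrightarrow> c y = c (y+q)"
        show False
          by (rule core[OF m uc cp unb injh', of k2 k1 q, OF _ _ _ _ _ _ _ _ rep]) (use k1 k2 q P_def False in auto)
      qed
    qed
  qed
qed

lemma partA:
  assumes sq: "\<forall>x. i-\<mu> \<le> x \<longrightarrow> x<i \<longrightarrow> w!(x-1) = w!(x+\<mu>-1)"
  and b: "\<mu> < i" and n: "i+\<mu>-1 \<le> length w"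
  and mini: "\<forall>q. 0<q \<longrightarrow> q<\<mu> \<longrightarrow> \<not> sat_local_period w i q"
  and t: "0<t" "t<\<mu>" and satp: "sat_local_period w (i+t) p"
  and minj: "\<forall>q. 0<q \<longrightarrow> q<p \<longrightarrow> \<not> sat_local_period w (i+t) q"
  and pm: "\<mu><p" "p<2*\<mu>" shows False
proof -
  define r where "r = p - \<mu>"
  have r: "0<r" "r<\<mu>" "p = \<mu>+r" using pm r_def by auto
  have sp: "\<And>x. 1 \<le> x \<Longrightarrow> i+t \<le> x+p \<Longrightarrow> x<i+t \<Longrightarrow> x+p \<le> length w \<Longrightarrow> w!(x-1) = w!(x+p-1)"
    using satp sat_iff[of p w "i+t"] pm by auto
  show False
  proof (cases "r < t")
    case True
    have "sat_local_period w (i+t) r"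
      unfolding sat_iff[OF r(1)]
    proof (intro allI impI)
      fix x assume x: "1 \<le> x" "i+t \<le> x+r" "x<i+t" "x+r \<le> length w"
      have xi: "i-\<mu> \<le> x-\<mu>" "x-\<mu> < i" using x True t b by auto
      have "w!(x-\<mu>-1) = w!(x-\<mu>+\<mu>-1)" using sq xi by blast
      moreover have "w!(x-\<mu>-1) = w!(x-\<mu>+p-1)" using sp[of "x-\<mu>"] x True t r b by auto
      moreover have "x-\<mu>+\<mu> = x" "x-\<mu>+p = x+r" using x True t r b by auto
      ultimately show "w!(x-1) = w!(x+r-1)" by simp
    qed
    then show False using minj r by auto
  next
    case False
    have "sat_local_period w i (\<mu>-r)"
    proof -
      have mr: "0 < \<mu>-r" using r by simp
      show ?thesis unfolding sat_iff[OF mr]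
    proof (intro allI impI)
      fix z assume z: "1 \<le> z" "i \<le> z+(\<mu>-r)" "z<i" "z+(\<mu>-r) \<le> length w"
      define y where "y = z - r"
      have y: "z = y + r" "i-\<mu> \<le> y" using z r y_def b by auto
      have "w!(z-1) = w!(z+\<mu>-1)" using sq z y by auto
      moreover have "w!(y-1) = w!(y+\<mu>-1)" using sq y z r by auto
      moreover have "w!(y-1) = w!(y+p-1)" using sp[of y] y z r False t b n by auto
      ultimately show "w!(z-1) = w!(z+(\<mu>-r)-1)" using y r by (simp add: add.commute add.left_commute)
    qed
    qed
    then show False using mini r by auto
  qed
qed



theorem lemma8:
  fixes w :: "'a list" and i :: nat
  assumes "1 \<le> i" and "i \<le> length w"
    and "int i - int (local_period w i) \<ge> 1"
    and "i + local_period w i - 1 \<le> length w"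
    and "local_period w i > 1"
  shows "\<exists>j. i < j \<and> j < i + local_period w i \<and>
           (local_period w j = local_period w i \<or> local_period w j \<ge> 2 * local_period w i)"
proof -
  define \<mu> where "\<mu> = local_period w i"
  have b: "\<mu> < i" and n: "i+\<mu>-1 \<le> length w" and m2: "2 \<le> \<mu>" using assms unfolding \<mu>_def by auto
  have mpos: "0 < \<mu>" using m2 by simp
  have sq: "\<forall>x. i-\<mu> \<le> x \<longrightarrow> x<i \<longrightarrow> w!(x-1) = w!(x+\<mu>-1)"
  proof (intro allI impI)
    fix x assume x: "i-\<mu> \<le> x" "x<i"
    have "sat_local_period w i \<mu>" using lp_sat \<mu>_def by simp
    then show "w!(x-1) = w!(x+\<mu>-1)" unfolding sat_iff[OF mpos] using x b n by auto
  qed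
  have mini: "\<forall>q. 0<q \<longrightarrow> q<\<mu> \<longrightarrow> \<not> sat_local_period w i q" using lp_min \<mu>_def by blast
  define bb where "bb = i - \<mu>"
  define c where "c y = w!(bb+y-1)" for y
  define u where "u = map (\<lambda>e. c (\<mu>+e)) [0..<\<mu>]"
  have lu: "length u = \<mu>" using u_def by simp
  have uc: "\<forall>e<\<mu>. u!e = c (\<mu>+e)" using u_def by simp
  have cp: "\<forall>e<\<mu>. c e = c (e+\<mu>)"
  proof (intro allI impI)
    fix e assume e: "e<\<mu>"
    have "w!(bb+e-1) = w!(bb+e+\<mu>-1)" using sq[rule_format, of "bb+e"] e b bb_def by auto
    then show "c e = c (e+\<mu>)" unfolding c_def by (simp add: add.assoc)
  qed
  have unb: "\<forall>d. 0<d \<and> d<\<mu> \<longrightarrow> (\<exists>s. s+d<\<mu> \<and> u!s \<noteq> u!(s+d))"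
  proof (intro allI impI; rule ccontr)
    fix d assume d: "0<d \<and> d<\<mu>" and "\<not> (\<exists>s. s+d<\<mu> \<and> u!s \<noteq> u!(s+d))"
    then have per: "\<And>s. s+d<\<mu> \<Longrightarrow> u!s = u!(s+d)" by blast
    have md: "0 < \<mu>-d" using d by simp
    have "sat_local_period w i (\<mu>-d)" unfolding sat_iff[OF md]
    proof (intro allI impI)
      fix x assume x: "1 \<le> x" "i \<le> x+(\<mu>-d)" "x<i" "x+(\<mu>-d) \<le> length w"
      define s where "s = x - bb"
      have s: "x = bb + s" "d \<le> s" "s < \<mu>" using x d b bb_def s_def by auto
      have "w!(x-1) = c s" using s c_def by simp
      also have "\<dots> = c (\<mu>+s)" using cp s by (simp add: add.commute)
      also have "\<dots> = u!s" using uc s by simp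
      also have "\<dots> = u!(s-d)" using per[of "s-d"] s by simp
      also have "\<dots> = c (\<mu>+(s-d))" using uc s by simp
      also have "\<dots> = w!(x+(\<mu>-d)-1)" using s d unfolding c_def by (simp add: add.commute add.left_commute)
      finally show "w!(x-1) = w!(x+(\<mu>-d)-1)" .
    qed
    then show False using mini d by auto
  qed
  obtain k where k: "0<k" "k<\<mu>" and crit: "\<forall>q. 0<q \<and> q<\<mu> \<longrightarrow>
            \<not> (\<forall>y. \<mu>+k \<le> y+q \<longrightarrow> y<\<mu>+k \<longrightarrow> y+q<2*\<mu> \<longrightarrow> c y = c (y+q))"
    using crit_exists[OF lu m2 uc cp unb] by blast
  define j where "j = i+k"
  have ge: "\<mu> \<le> local_period w j"
  proof (rule ccontr)
    assume "\<not> \<mu> \<le> local_period w j"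
    then have q: "0 < local_period w j" "local_period w j < \<mu>" using lp_pos by auto
    define q where "q = local_period w j"
    have sj: "sat_local_period w j q" using lp_sat q_def by simp
    have "\<forall>y. \<mu>+k \<le> y+q \<longrightarrow> y<\<mu>+k \<longrightarrow> y+q<2*\<mu> \<longrightarrow> c y = c (y+q)"
    proof (intro allI impI)
      fix y assume y: "\<mu>+k \<le> y+q" "y<\<mu>+k" "y+q<2*\<mu>"
      have "w!(bb+y-1) = w!(bb+y+q-1)"
        using sj unfolding sat_iff[OF q(1)[folded q_def]] using y b n bb_def j_def
        by (auto elim!: allE[of _ "bb+y"])
      then show "c y = c (y+q)" unfolding c_def by (simp add: add.assoc)
    qed
    then show False using crit q q_def by auto
  qed
  show ?thesis
  proof (intro exI conjI)
    show "i < j" "j < i + local_period w i" using k j_def \<mu>_def by auto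
    show "local_period w j = local_period w i \<or> 2 * local_period w i \<le> local_period w j"
    proof (rule ccontr)
      assume H: "\<not> ?thesis"
      then have pm: "\<mu> < local_period w j" "local_period w j < 2*\<mu>" using ge \<mu>_def by auto
      show False
        by (rule partA[OF sq b n mini k, of "local_period w j"])
           (use lp_sat[of w j] lp_min[of _ w j] j_def pm in auto)
    qed
  qed
qed


end
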